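(* For every $\lambda\in\mathbb{R}$, the operator $X:\mathcal{F}_\lambda(\mathbb{R}^{2n+1})\to\mathcal{S}^1_{\lambda+\frac{1}{n+1}}(\mathbb{R}^{2n+1})$ defined by \[X(f)(x,\xi)=\sum_{k=1}^n\big(\xi_{q^k}\partial_{p^k}f-\xi_{p^k}\partial_{q^k}f\big)-\partial_tf\,\langle E_s,\xi\rangle+\xi_t\big(E_s f+2(n+1)\lambda f\big)\] commutes with the action of every contact vector field: $X\circ L_Z=L_Z\circ X$ for all $Z\in\mathcal{C}(\mathbb{R}^{2n+1})$.
   Context: Let $n\ge1$, $M=\mathbb{R}^{2n+1}$ with coordinates $x=(q^1,\dots,q^n,p^1,\dots,p^n,t)$ and contact form $\alpha=\frac12\big(\sum_{i=1}^n(p^idq^i-q^idp^i)-dt\big)$. The contact algebra is $\mathcal{C}(M)=\{Z\in\mathrm{Vect}(M):L_Z\alpha=f_Z\alpha\text{ for some smooth function }f_Z\}$. $\mathcal{F}_\lambda(M)$ is the space of $\lambda$-densities $f|dx^1\wedge\cdots\wedge dx^{2n+1}|^\lambda$, identified with smooth functions $f$, on which a vector field $Y=\sum_jY^j\partial_{x^j}$ acts by $L_Yf=\sum_jY^j\partial_{x^j}f+\lambda(\sum_j\partial_{x^j}Y^j)f$. For $\delta\in\mathbb{R}$, $\mathcal{S}^k_\delta(M)$ is the space of smooth symmetric contravariant $k$-tensor fields with coefficients in $\delta$-densities, identified with smooth functions $S(x,\xi)$ on $M\times\mathbb{R}^{2n+1}$ that are homogeneous polynomials of degree $k$ in $\xi=(\xi_{q^1},\dots,\xi_{q^n},\xi_{p^1},\dots,\xi_{p^n},\xi_t)$;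 a vector field $Y$ acts by $L_YS=\sum_jY^j\partial_{x^j}S+\delta(\sum_j\partial_{x^j}Y^j)S-\sum_{j,l}(\partial_{x^l}Y^j)\xi_j\partial_{\xi_l}S$. Notation: $E_s=\sum_i(p^i\partial_{p^i}+q^i\partial_{q^i})$ and $\langle E_s,\xi\rangle=\sum_i(p^i\xi_{p^i}+q^i\xi_{q^i})$. *)

theory Defs
  imports "HOL-Analysis.Analysis"
begin

text \<open>Points of M = R^(2n+1) are triples (q, p, t) with q, p in real^'n, t real;
  n = CARD('n). Coordinates q^i = fst x $ i, p^i = fst (snd x) $ i, t = snd (snd x).\<close>

type_synonym 'n pt = "(real^'n) \<times> (real^'n) \<times> real"

definition pd :: "('a::euclidean_space \<Rightarrow> real) \<Rightarrow> 'a \<Rightarrow> 'a \<Rightarrow> real" where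
  "pd f v x = frechet_derivative f (at x) v"

fun Ck :: "nat \<Rightarrow> ('a::euclidean_space \<Rightarrow> real) \<Rightarrow> bool" where
  "Ck 0 f = continuous_on UNIV f"
| "Ck (Suc k) f = ((\<forall>x. f differentiable (at x)) \<and> (\<forall>b\<in>Basis. Ck k (\<lambda>x. pd f b x)))"

definition smooth :: "('a::euclidean_space \<Rightarrow> real) \<Rightarrow> bool" where
  "smooth f = (\<forall>k. Ck k f)"

definition smooth_vf :: "('a::euclidean_space \<Rightarrow> 'a) \<Rightarrow> bool" where
  "smooth_vf Y = (\<forall>b\<in>Basis. smooth (\<lambda>x. Y x \<bullet> b))"

definition divg :: "('a::euclidean_space \<Rightarrow> 'a) \<Rightarrow> 'a \<Rightarrow> real" where
  "divg Y x = (\<Sum>b\<in>Basis. pd (\<lambda>y. Y y \<bullet> b) b x)"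

text \<open>Lie derivative of a 1-form a (component a_b = a x \<bullet> b) along Y:
  (L_Y a)_b = Y(a_b) + sum_c a_c * d_b Y^c.\<close>
definition lie_form :: "('a::euclidean_space \<Rightarrow> 'a) \<Rightarrow> ('a \<Rightarrow> 'a) \<Rightarrow> 'a \<Rightarrow> 'a" where
  "lie_form Y a x = (\<Sum>b\<in>Basis.
      (pd (\<lambda>y. a y \<bullet> b) (Y x) x + (\<Sum>c\<in>Basis. (a x \<bullet> c) * pd (\<lambda>y. Y y \<bullet> c) b x)) *\<^sub>R b)"

text \<open>The contact form alpha = 1/2 (sum (p^i dq^i - q^i dp^i) - dt).\<close>
definition alpha :: "'n::finite pt \<Rightarrow> 'n pt" where
  "alpha x = ((1/2) *\<^sub>R fst (snd x), (- 1/2) *\<^sub>R fst x, - 1/2)"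

definition contact_vf :: "('n::finite pt \<Rightarrow> 'n pt) \<Rightarrow> bool" where
  "contact_vf Z = (smooth_vf Z \<and> (\<exists>g. smooth g \<and> (\<forall>x. lie_form Z alpha x = g x *\<^sub>R alpha x)))"

definition lie_dens :: "real \<Rightarrow> ('a::euclidean_space \<Rightarrow> 'a) \<Rightarrow> ('a \<Rightarrow> real) \<Rightarrow> 'a \<Rightarrow> real" where
  "lie_dens lam Y f x = pd f (Y x) x + lam * divg Y x * f x"

text \<open>Action on symbols S(x, xi) with coefficients in delta-densities
  (xi_j = xi \<bullet> j for j in Basis).\<close>
definition lie_symb :: "real \<Rightarrow> ('a::euclidean_space \<Rightarrow> 'a) \<Rightarrow> ('a \<Rightarrow> 'a \<Rightarrow> real) \<Rightarrow> 'a \<Rightarrow> 'a \<Rightarrow> real" where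
  "lie_symb del Y S x xi = pd (\<lambda>y. S y xi) (Y x) x + del * divg Y x * S x xi
     - (\<Sum>j\<in>Basis. \<Sum>l\<in>Basis. pd (\<lambda>y. Y y \<bullet> j) l x * (xi \<bullet> j) * pd (\<lambda>eta. S x eta) l xi)"

definition dq :: "'n::finite \<Rightarrow> ('n pt \<Rightarrow> real) \<Rightarrow> 'n pt \<Rightarrow> real" where
  "dq k f x = pd f (axis k 1, 0, 0) x"
definition dp :: "'n::finite \<Rightarrow> ('n pt \<Rightarrow> real) \<Rightarrow> 'n pt \<Rightarrow> real" where
  "dp k f x = pd f (0, axis k 1, 0) x"
definition dt :: "('n::finite pt \<Rightarrow> real) \<Rightarrow> 'n pt \<Rightarrow> real" where
  "dt f x = pd f (0, 0, 1) x"

definition Es :: "('n::finite pt \<Rightarrow> real) \<Rightarrow> 'n pt \<Rightarrow> real" where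
  "Es f x = (\<Sum>i\<in>UNIV. fst (snd x) $ i * dp i f x + fst x $ i * dq i f x)"
definition Es_xi :: "'n::finite pt \<Rightarrow> 'n pt \<Rightarrow> real" where
  "Es_xi x xi = (\<Sum>i\<in>UNIV. fst (snd x) $ i * fst (snd xi) $ i + fst x $ i * fst xi $ i)"

definition Xop :: "real \<Rightarrow> ('n::finite pt \<Rightarrow> real) \<Rightarrow> 'n pt \<Rightarrow> 'n pt \<Rightarrow> real" where
  "Xop lam f x xi =
     (\<Sum>k\<in>UNIV. fst xi $ k * dp k f x - fst (snd xi) $ k * dq k f x)
     - dt f x * Es_xi x xi
     + snd (snd xi) * (Es f x + 2 * (real CARD('n) + 1) * lam * f x)"

end

theory Submission
  imports Defs
begin


lemma pd_has: "u differentiable (at x) \<Longrightarrow> (u has_derivative (\<lambda>w. pd u w x)) (at x)"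
  unfolding pd_def using frechet_derivative_works by (metis eta_contract_eq)

lemma pd_eq: "(u has_derivative u') (at x) \<Longrightarrow> pd u w x = u' w"
  unfolding pd_def using frechet_derivative_at by metis

lemma pd_linear: "u differentiable (at x) \<Longrightarrow> linear (\<lambda>w. pd u w x)"
  unfolding pd_def using linear_frechet_derivative by (metis eta_contract_eq)

lemma pd_expand: 
  fixes u :: "'a::euclidean_space \<Rightarrow> real"
  assumes "u differentiable (at x)" shows "pd u w x = (\<Sum>b\<in>Basis. (w \<bullet> b) * pd u b x)"
proof -
  have "pd u w x = pd u (\<Sum>b\<in>Basis. (w \<bullet> b) *\<^sub>R b) x" by (simp add: euclidean_representation)
  also have "\<dots> = (\<Sum>b\<in>Basis. (w \<bullet> b) * pd u b x)"
    using linear_sum[OF pd_linear[OF assms], of "\<lambda>b. (w \<bullet> b) *\<^sub>R b" Basis]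
      linear_scale[OF pd_linear[OF assms]]
    by simp
  finally show ?thesis .
qed

lemma pd_dir_add: "u differentiable (at x) \<Longrightarrow> pd u (a + b) x = pd u a x + pd u b x"
  using linear_add[OF pd_linear] by blast
lemma pd_dir_diff: "u differentiable (at x) \<Longrightarrow> pd u (a - b) x = pd u a x - pd u b x"
  using linear_diff[OF pd_linear] by blast
lemma pd_dir_scale: "u differentiable (at x) \<Longrightarrow> pd u (r *\<^sub>R a) x = r * pd u a x"
  using linear_scale[OF pd_linear] by fastforce
lemma pd_dir_neg: "u differentiable (at x) \<Longrightarrow> pd u (- a) x = - pd u a x"
  using linear_neg[OF pd_linear] by blast
lemma pd_dir_zero: "u differentiable (at x) \<Longrightarrow> pd u 0 x = 0"
  using linear_0[OF pd_linear] by blast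

lemma pd_add: "u differentiable (at x) \<Longrightarrow> v differentiable (at x) \<Longrightarrow>
   pd (\<lambda>y. u y + v y) w x = pd u w x + pd v w x"
  by (rule pd_eq[OF has_derivative_add[OF pd_has pd_has]])
lemma pd_diff: "u differentiable (at x) \<Longrightarrow> v differentiable (at x) \<Longrightarrow>
   pd (\<lambda>y. u y - v y) w x = pd u w x - pd v w x"
  by (rule pd_eq[OF has_derivative_diff[OF pd_has pd_has]])
lemma pd_mult: fixes u v :: "'a::euclidean_space \<Rightarrow> real"
  shows "u differentiable (at x) \<Longrightarrow> v differentiable (at x) \<Longrightarrow>
   pd (\<lambda>y. u y * v y) w x = u x * pd v w x + pd u w x * v x"
  by (rule pd_eq[OF has_derivative_mult[OF pd_has pd_has]])
lemma pd_cmult: fixes u :: "'a::euclidean_space \<Rightarrow> real"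
  shows "u differentiable (at x) \<Longrightarrow> pd (\<lambda>y. c * u y) w x = c * pd u w x"
  by (rule pd_eq[OF has_derivative_mult_right[OF pd_has]])
lemma pd_const: "pd (\<lambda>y. c) w x = 0"
  by (rule pd_eq[OF has_derivative_const])
lemma pd_sum: fixes u :: "'i \<Rightarrow> 'a::euclidean_space \<Rightarrow> real"
  shows "finite I \<Longrightarrow> (\<And>i. i \<in> I \<Longrightarrow> u i differentiable (at x)) \<Longrightarrow>
   pd (\<lambda>y. \<Sum>i\<in>I. u i y) w x = (\<Sum>i\<in>I. pd (u i) w x)"
  by (rule pd_eq[OF has_derivative_sum[OF pd_has]]) auto
lemma pd_inner: "pd (\<lambda>y. inner y v) w x = inner w v"
  by (rule pd_eq[OF has_derivative_inner_left[OF has_derivative_ident]])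

lemma deriv_line:
  fixes u :: "'a::euclidean_space \<Rightarrow> real"
  assumes du: "\<And>y. u differentiable (at y)"
  shows "((\<lambda>s. u (p + s *\<^sub>R a)) has_real_derivative pd u a (p + s *\<^sub>R a)) (at s)"
proof -
  have "((\<lambda>s. p + s *\<^sub>R a) has_derivative (\<lambda>s. s *\<^sub>R a)) (at s)"
    by (auto intro!: derivative_eq_intros)
  from has_derivative_compose[OF this pd_has[OF du]]
  have "((\<lambda>s. u (p + s *\<^sub>R a)) has_derivative (\<lambda>t. pd u (t *\<^sub>R a) (p + s *\<^sub>R a))) (at s)" .
  then show ?thesis
    by (rule has_derivative_imp_has_field_derivative) (simp add: pd_dir_scale[OF du] mult.commute)
qed

lemma mixed_mvt:
  fixes u :: "'a::euclidean_space \<Rightarrow> real"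
  assumes du: "\<And>y. u differentiable (at y)" and da: "\<And>y. pd u a differentiable (at y)"
    and h: "0 < h"
  shows "\<exists>s r. 0 < s \<and> s < h \<and> 0 < r \<and> r < h \<and>
     u (x + h *\<^sub>R a + h *\<^sub>R b) - u (x + h *\<^sub>R a) - u (x + h *\<^sub>R b) + u x
       = h^2 * pd (pd u a) b (x + s *\<^sub>R a + r *\<^sub>R b)"
proof -
  define phi where "phi s = u ((x + h *\<^sub>R b) + s *\<^sub>R a) - u (x + s *\<^sub>R a)" for s
  have "DERIV phi s :> pd u a ((x + h *\<^sub>R b) + s *\<^sub>R a) - pd u a (x + s *\<^sub>R a)" for s
    unfolding phi_def by (intro DERIV_diff deriv_line du)
  from MVT2[OF h this] obtain s where s: "0 < s" "s < h"
    and e1: "phi h - phi 0 = (h - 0) * (pd u a ((x + h *\<^sub>R b) + s *\<^sub>R a) - pd u a (x + s *\<^sub>R a))"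
    by blast
  define psi where "psi r = pd u a ((x + s *\<^sub>R a) + r *\<^sub>R b)" for r
  have "DERIV psi r :> pd (pd u a) b ((x + s *\<^sub>R a) + r *\<^sub>R b)" for r
    unfolding psi_def by (intro deriv_line da)
  from MVT2[OF h this] obtain r where r: "0 < r" "r < h"
    and e2: "psi h - psi 0 = (h - 0) * pd (pd u a) b ((x + s *\<^sub>R a) + r *\<^sub>R b)"
    by blast
  have "psi h - psi 0 = pd u a ((x + h *\<^sub>R b) + s *\<^sub>R a) - pd u a (x + s *\<^sub>R a)"
    unfolding psi_def by (simp add: algebra_simps)
  with e1 e2 have "phi h - phi 0 = h^2 * pd (pd u a) b (x + s *\<^sub>R a + r *\<^sub>R b)"
    by (simp add: power2_eq_square)
  moreover have "phi h - phi 0 = u (x + h *\<^sub>R a + h *\<^sub>R b) - u (x + h *\<^sub>R a) - u (x + h *\<^sub>R b) + u x"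
    unfolding phi_def by (simp add: algebra_simps)
  ultimately show ?thesis using s r by metis
qed

lemma schwarz:
  fixes u :: "'a::euclidean_space \<Rightarrow> real"
  assumes du: "\<And>y. u differentiable (at y)" and da: "\<And>y. pd u a differentiable (at y)"
    and db: "\<And>y. pd u b differentiable (at y)"
    and ca: "isCont (pd (pd u a) b) x" and cb: "isCont (pd (pd u b) a) x"
  shows "pd (pd u a) b x = pd (pd u b) a x"
proof (rule ccontr)
  define A where "A = pd (pd u a) b"
  define B where "B = pd (pd u b) a"
  assume ne: "pd (pd u a) b x \<noteq> pd (pd u b) a x"
  define e where "e = \<bar>A x - B x\<bar> / 2"
  have e: "e > 0" using ne by (simp add: e_def A_def B_def)
  obtain d1 where d1: "d1 > 0" "\<And>y. dist y x < d1 \<Longrightarrow> dist (A y) (A x) < e"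
    using ca e unfolding A_def continuous_at_eps_delta by blast
  obtain d2 where d2: "d2 > 0" "\<And>y. dist y x < d2 \<Longrightarrow> dist (B y) (B x) < e"
    using cb e unfolding B_def continuous_at_eps_delta by blast
  define h where "h = min d1 d2 / (2 * (norm a + norm b + 1))"
  have pos: "0 < 2 * (norm a + norm b + 1)" by (smt (verit) norm_ge_zero)
  have h: "h > 0" unfolding h_def using d1 d2 pos by (intro divide_pos_pos) auto
  have hb: "h * (norm a + norm b) < min d1 d2"
  proof -
    have "h * (norm a + norm b) < h * (2 * (norm a + norm b + 1))"
      using h pos by (intro mult_strict_left_mono) (smt (verit) norm_ge_zero)+
    also have "\<dots> = min d1 d2" using pos unfolding h_def by simp
    finally show ?thesis .
  qed
  have close: "dist (x + s *\<^sub>R v + r *\<^sub>R w) x < min d1 d2"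
    if "0 < s" "s < h" "0 < r" "r < h" "norm v + norm w = norm a + norm b" for s r v w
  proof -
    have "dist (x + s *\<^sub>R v + r *\<^sub>R w) x = norm (s *\<^sub>R v + r *\<^sub>R w)"
      by (simp add: dist_norm)
    also have "\<dots> \<le> s * norm v + r * norm w"
      using norm_triangle_ineq[of "s *\<^sub>R v" "r *\<^sub>R w"] that by simp
    also have "\<dots> \<le> h * norm v + h * norm w"
      using that by (intro add_mono mult_right_mono) auto
    also have "\<dots> < min d1 d2" using hb that by (simp add: distrib_left[symmetric])
    finally show ?thesis .
  qed
  obtain s r where sr: "0 < s" "s < h" "0 < r" "r < h"
    and E1: "u (x + h *\<^sub>R a + h *\<^sub>R b) - u (x + h *\<^sub>R a) - u (x + h *\<^sub>R b) + u x
       = h^2 * A (x + s *\<^sub>R a + r *\<^sub>R b)"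
    using mixed_mvt[OF du da h, of x b] unfolding A_def by blast
  obtain s' r' where sr': "0 < s'" "s' < h" "0 < r'" "r' < h"
    and E2: "u (x + h *\<^sub>R b + h *\<^sub>R a) - u (x + h *\<^sub>R b) - u (x + h *\<^sub>R a) + u x
       = h^2 * B (x + s' *\<^sub>R b + r' *\<^sub>R a)"
    using mixed_mvt[OF du db h, of x a] unfolding B_def by blast
  have "h^2 * A (x + s *\<^sub>R a + r *\<^sub>R b) = h^2 * B (x + s' *\<^sub>R b + r' *\<^sub>R a)"
    using E1 E2 by (simp add: algebra_simps)
  hence AB: "A (x + s *\<^sub>R a + r *\<^sub>R b) = B (x + s' *\<^sub>R b + r' *\<^sub>R a)" using h by simp
  have "dist (A (x + s *\<^sub>R a + r *\<^sub>R b)) (A x) < e"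
    using d1 close[OF sr] by simp
  moreover have "dist (B (x + s' *\<^sub>R b + r' *\<^sub>R a)) (B x) < e"
    using d2 close[OF sr', of b a] by (simp add: add.commute)
  ultimately have "\<bar>A x - B x\<bar> < 2 * e" using AB by (simp add: dist_real_def)
  then show False by (simp add: e_def)
qed


definition C1 :: "('a::euclidean_space \<Rightarrow> real) \<Rightarrow> bool" where
  "C1 u = ((\<forall>y. u differentiable (at y)) \<and> (\<forall>c\<in>Basis. continuous_on UNIV (pd u c)))"
definition C2 :: "('a::euclidean_space \<Rightarrow> real) \<Rightarrow> bool" where
  "C2 u = (C1 u \<and> (\<forall>c\<in>Basis. C1 (pd u c)))"

lemma smooth_C1: "smooth u \<Longrightarrow> C1 u"
proof -
  assume "smooth u"
  hence "Ck 2 u" unfolding smooth_def by blast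
  hence "(\<forall>x. u differentiable (at x)) \<and> (\<forall>b\<in>Basis. (\<forall>x. pd u b differentiable (at x)))"
    by (simp add: numeral_2_eq_2)
  thus ?thesis unfolding C1_def
    by (meson continuous_on_eq_continuous_within differentiable_imp_continuous_within)
qed

lemma smooth_C2: "smooth u \<Longrightarrow> C2 u"
proof -
  assume s: "smooth u"
  hence "Ck 3 u" unfolding smooth_def by blast
  hence "(\<forall>x. u differentiable (at x)) \<and> (\<forall>b\<in>Basis. (\<forall>x. pd u b differentiable (at x)) \<and>
     (\<forall>c\<in>Basis. (\<forall>x. pd (pd u b) c differentiable (at x))))"
    by (simp add: numeral_3_eq_3)
  thus ?thesis using smooth_C1[OF s] unfolding C1_def C2_def
    by (meson continuous_on_eq_continuous_within differentiable_imp_continuous_within)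
qed

lemma C1_diff: "C1 u \<Longrightarrow> u differentiable (at y)" by (simp add: C1_def)
lemma C1_cont: "C1 u \<Longrightarrow> continuous_on UNIV u"
  unfolding C1_def by (meson continuous_on_eq_continuous_within differentiable_imp_continuous_within)

lemma C1_pd_fun: "C1 u \<Longrightarrow> pd u a = (\<lambda>y. \<Sum>b\<in>Basis. (a \<bullet> b) * pd u b y)"
  by (rule ext, rule pd_expand, simp add: C1_def)

lemma C1_pd_cont: "C1 u \<Longrightarrow> continuous_on UNIV (pd u a)"
  apply (subst C1_pd_fun, assumption)
  by (intro continuous_intros) (auto simp: C1_def)

lemma C1_I: "(\<And>y. u differentiable (at y)) \<Longrightarrow> (\<And>c. c \<in> Basis \<Longrightarrow> continuous_on UNIV (pd u c)) \<Longrightarrow> C1 u"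
  by (simp add: C1_def)

lemma C1_const: "C1 (\<lambda>y. k)"
  by (rule C1_I) (auto simp: pd_const)
lemma C1_lin: "C1 (\<lambda>y. inner y v)"
  by (rule C1_I) (auto simp: pd_inner intro!: continuous_intros)
lemma C1_add: assumes u: "C1 u" and v: "C1 v" shows "C1 (\<lambda>y. u y + v y)"
proof -
  have e: "pd (\<lambda>y. u y + v y) c = (\<lambda>y. pd u c y + pd v c y)" for c
    by (rule ext, rule pd_add) (auto simp: C1_diff u v)
  have c: "continuous_on UNIV (pd u c)" "continuous_on UNIV (pd v c)" for c using u v by (auto intro: C1_pd_cont)
  show ?thesis by (rule C1_I) (auto simp: e C1_diff u v intro!: continuous_intros c)
qed
lemma C1_diff': assumes u: "C1 u" and v: "C1 v" shows "C1 (\<lambda>y. u y - v y)"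
proof -
  have e: "pd (\<lambda>y. u y - v y) c = (\<lambda>y. pd u c y - pd v c y)" for c
    by (rule ext, rule pd_diff) (auto simp: C1_diff u v)
  have c: "continuous_on UNIV (pd u c)" "continuous_on UNIV (pd v c)" for c using u v by (auto intro: C1_pd_cont)
  show ?thesis by (rule C1_I) (auto simp: e C1_diff u v intro!: continuous_intros c)
qed
lemma C1_mult: assumes u: "C1 u" and v: "C1 v" shows "C1 (\<lambda>y. u y * v y)"
proof -
  have e: "pd (\<lambda>y. u y * v y) c = (\<lambda>y. u y * pd v c y + pd u c y * v y)" for c
    by (rule ext, rule pd_mult) (auto simp: C1_diff u v)
  have c: "continuous_on UNIV (pd u c)" "continuous_on UNIV (pd v c)" for c using u v by (auto intro: C1_pd_cont)
  show ?thesis by (rule C1_I) (auto simp: e C1_diff u v intro!: continuous_intros c C1_cont[OF u] C1_cont[OF v] differentiable_mult)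
qed
lemma C1_sum: "finite I \<Longrightarrow> (\<And>i. i \<in> I \<Longrightarrow> C1 (u i)) \<Longrightarrow> C1 (\<lambda>y. \<Sum>i\<in>I. u i y)"
  by (induction I rule: finite_induct) (auto intro: C1_add C1_const)

lemma C2_C1: "C2 u \<Longrightarrow> C1 u" by (simp add: C2_def)
lemma C2_pd_C1: "C2 u \<Longrightarrow> C1 (pd u a)"
proof -
  assume u: "C2 u"
  have "pd u a = (\<lambda>y. \<Sum>b\<in>Basis. (a \<bullet> b) * pd u b y)" using C1_pd_fun[OF C2_C1[OF u]] .
  moreover have "C1 (\<lambda>y. \<Sum>b\<in>Basis. (a \<bullet> b) * pd u b y)"
    using u by (intro C1_sum C1_mult C1_const) (auto simp: C2_def)
  ultimately show ?thesis by simp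
qed

lemma C2_sym: "C2 u \<Longrightarrow> pd (pd u a) w y = pd (pd u w) a y"
  apply (rule schwarz)
  by (auto simp: C1_diff C2_C1 C2_pd_C1 intro!: continuous_on_interior[of UNIV] C1_pd_cont)

lemma C2_exp1: "C2 u \<Longrightarrow> pd (pd u a) w y = (\<Sum>b\<in>Basis. (a \<bullet> b) * pd (pd u b) w y)"
proof -
  assume u: "C2 u"
  have "pd (pd u a) w y = pd (\<lambda>y. \<Sum>b\<in>Basis. (a \<bullet> b) * pd u b y) w y"
    by (subst C1_pd_fun[OF C2_C1[OF u]]) simp
  also have "\<dots> = (\<Sum>b\<in>Basis. (a \<bullet> b) * pd (pd u b) w y)"
    using u by (subst pd_sum) (auto simp: pd_cmult C1_diff C2_pd_C1 differentiable_mult)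
  finally show ?thesis .
qed

lemma C2_bil:
  assumes u: "C2 u"
  shows "pd (pd u (a + b)) w y = pd (pd u a) w y + pd (pd u b) w y"
    "pd (pd u (r *\<^sub>R a)) w y = r * pd (pd u a) w y"
  using u by (simp_all add: C2_exp1[OF u, of "_ + _"] C2_exp1[OF u, of "_ *\<^sub>R _"] C2_exp1[OF u, of a]
      C2_exp1[OF u, of b] inner_add_left sum.distrib algebra_simps sum_distrib_left)


definition Kop :: "'n::finite pt \<Rightarrow> 'n pt" where "Kop v = (- fst (snd v), fst v, 0)"
definition Pop :: "'n::finite pt \<Rightarrow> 'n pt" where "Pop v = (fst v, fst (snd v), 0)"
definition et :: "'n::finite pt" where "et = (0,0,1)"

lemma Kop_simps[simp]: "Kop (a+b) = Kop a + Kop b" "Kop (r *\<^sub>R a) = r *\<^sub>R Kop a" "Kop (-a) = - Kop a"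
  "Kop (a - b) = Kop a - Kop b" "Kop 0 = 0" "Kop et = 0" "Kop (Pop a) = Kop a" "Pop (Kop a) = Kop a"
  by (auto simp: Kop_def Pop_def et_def algebra_simps zero_prod_def)
lemma Pop_simps[simp]: "Pop (a+b) = Pop a + Pop b" "Pop (r *\<^sub>R a) = r *\<^sub>R Pop a" "Pop (-a) = - Pop a"
  "Pop (a - b) = Pop a - Pop b" "Pop 0 = 0" "Pop et = 0" "Pop (Pop a) = Pop a"
  by (auto simp: Pop_def et_def algebra_simps zero_prod_def)
lemma inner_KP: "inner (Kop a) (Kop b) = inner (Pop a) b" "inner (Kop a) et = 0" "inner et (Kop a) = 0"
  "inner (Pop a) et = 0" "inner et (Pop a) = 0" "inner et (et::'n::finite pt) = 1"
  "inner (Kop a) a = 0" "inner a (Kop a) = 0"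
  "inner a (Kop b) = - inner (Kop a) b"
  "inner (Kop a) (Pop b) = inner (Kop a) b"
  "inner (Pop a) (Pop b) = inner (Pop a) b"
  by (auto simp: Kop_def Pop_def et_def inner_prod_def algebra_simps inner_commute)

definition PhiJ :: "real \<Rightarrow> 'n::finite pt \<Rightarrow> real \<Rightarrow> 'n pt \<Rightarrow> 'n pt \<Rightarrow> real" where
 "PhiJ c gu u0 x xi = inner gu (Kop xi) - inner gu et * inner (Pop x) xi + inner xi et * (inner gu (Pop x) + c * u0)"
definition DPhiJ :: "real \<Rightarrow> ('n::finite pt \<Rightarrow> 'n pt \<Rightarrow> real) \<Rightarrow> 'n pt \<Rightarrow> 'n pt \<Rightarrow> 'n pt \<Rightarrow> 'n pt \<Rightarrow> real" where
 "DPhiJ c B gu x xi w = B (Kop xi) w - B et w * inner (Pop x) xi - inner gu et * inner (Pop w) xi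
   + inner xi et * (B (Pop x) w + inner gu (Pop w) + c * inner gu w)"

lemma alg:
  fixes F2 H2 :: "'n::finite pt \<Rightarrow> 'n pt \<Rightarrow> real" and gH gf x xi :: "'n pt" and H0 f0 c :: real
  assumes F2l: "\<And>a b w. F2 (a+b) w = F2 a w + F2 b w" "\<And>a r w. F2 (r *\<^sub>R a) w = r * F2 a w"
    and F2s: "\<And>a b. F2 a b = F2 b a"
  assumes H2l: "\<And>a b w. H2 (a+b) w = H2 a w + H2 b w" "\<And>a r w. H2 (r *\<^sub>R a) w = r * H2 a w"
    and H2s: "\<And>a b. H2 a b = H2 b a"
  defines "Zv \<equiv> - Kop gH - inner gH et *\<^sub>R Pop x + (inner (Pop x) gH - 2 * H0) *\<^sub>R et"
  defines "Vv \<equiv> - Kop gf - inner gf et *\<^sub>R Pop x + (inner (Pop x) gf + c * f0) *\<^sub>R et"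
  defines "dL \<equiv> \<lambda>a. F2 Zv a + DPhiJ (-2) H2 gH x gf a - c * (H2 et a * f0 + inner gH et * inner gf a)"
  defines "L0 \<equiv> inner gf Zv - c * inner gH et * f0"
  shows "dL (Kop xi) - dL et * inner (Pop x) xi + inner xi et * (dL (Pop x) + c * L0)
     = DPhiJ c F2 gf x xi Zv - (c+2) * inner gH et * PhiJ c gf f0 x xi - DPhiJ (-2) H2 gH x xi Vv"
proof -
  have F2n: "F2 (-a) w = - F2 a w" for a w using F2l(2)[where r="-1" and a=a and w=w] by simp
  have F2d: "F2 (a - b) w = F2 a w - F2 b w" for a b w
    using F2l(1)[where a=a and b="-b" and w=w] F2n[of b w] by simp
  have F2m: "F2 (-a) w = - F2 a w" "F2 (a - b) w = F2 a w - F2 b w" "F2 w (a+b) = F2 w a + F2 w b"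
    "F2 w (-a) = - F2 w a" "F2 w (a - b) = F2 w a - F2 w b" "F2 w (r *\<^sub>R a) = r * F2 w a" for a b w r
    by (simp_all only: F2n F2d) (metis F2s F2l F2n F2d)+
  have H2n: "H2 (-a) w = - H2 a w" for a w using H2l(2)[where r="-1" and a=a and w=w] by simp
  have H2d: "H2 (a - b) w = H2 a w - H2 b w" for a b w
    using H2l(1)[where a=a and b="-b" and w=w] H2n[of b w] by simp
  have H2m: "H2 (-a) w = - H2 a w" "H2 (a - b) w = H2 a w - H2 b w" "H2 w (a+b) = H2 w a + H2 w b"
    "H2 w (-a) = - H2 w a" "H2 w (a - b) = H2 w a - H2 w b" "H2 w (r *\<^sub>R a) = r * H2 w a" for a b w r
    by (simp_all only: H2n H2d) (metis H2s H2l H2n H2d)+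
  have ie: "inner (Kop a) b = inner (fst a) (fst (snd b)) - inner (fst (snd a)) (fst b)"
    "inner b (Kop a) = inner (fst a) (fst (snd b)) - inner (fst (snd a)) (fst b)"
    "inner (Pop a) b = inner (fst a) (fst b) + inner (fst (snd a)) (fst (snd b))"
    "inner b (Pop a) = inner (fst a) (fst b) + inner (fst (snd a)) (fst (snd b))"
    "inner a et = snd (snd a)" "inner et a = snd (snd a)"
    for a b :: "'n pt"
    by (auto simp: Kop_def Pop_def et_def inner_prod_def inner_commute)
  show ?thesis unfolding Zv_def Vv_def dL_def L0_def DPhiJ_def PhiJ_def
    by (simp add: F2l F2m H2l H2m inner_simps algebra_simps F2s H2s ie inner_commute del: inner_KP)
qed


definition grad :: "('a::euclidean_space \<Rightarrow> real) \<Rightarrow> 'a \<Rightarrow> 'a" where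
  "grad u y = (\<Sum>b\<in>Basis. pd u b y *\<^sub>R b)"

lemma pd_grad: "u differentiable (at y) \<Longrightarrow> pd u w y = inner (grad u y) w"
  unfolding grad_def inner_sum_left by (subst pd_expand) (auto simp: mult.commute inner_commute)

definition Vvec :: "real \<Rightarrow> 'n::finite pt \<Rightarrow> real \<Rightarrow> 'n pt \<Rightarrow> 'n pt" where
  "Vvec c gu u0 x = - Kop gu - inner gu et *\<^sub>R Pop x + (inner (Pop x) gu + c * u0) *\<^sub>R et"

lemma ie: "inner (Kop a) b = inner (fst a) (fst (snd b)) - inner (fst (snd a)) (fst b)"
    "inner b (Kop a) = inner (fst a) (fst (snd b)) - inner (fst (snd a)) (fst b)"
    "inner (Pop a) b = inner (fst a) (fst b) + inner (fst (snd a)) (fst (snd b))"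
    "inner b (Pop a) = inner (fst a) (fst b) + inner (fst (snd a)) (fst (snd b))"
    "inner a et = snd (snd a)" "inner et a = snd (snd a)"
    for a b :: "'n::finite pt"
    by (auto simp: Kop_def Pop_def et_def inner_prod_def inner_commute)

lemma PhiJ_Vvec: "PhiJ c gu u0 x xi = inner (Vvec c gu u0 x) xi"
  unfolding PhiJ_def Vvec_def by (simp add: ie inner_simps algebra_simps inner_commute del: inner_KP)

lemma alg2:
  fixes F2 H2 :: "'n::finite pt \<Rightarrow> 'n pt \<Rightarrow> real" and gH gf x xi Zv Vv :: "'n pt"
    and H0 f0 c :: real and dL :: "'n pt \<Rightarrow> real"
  assumes F2l: "\<And>a b w. F2 (a+b) w = F2 a w + F2 b w" "\<And>a r w. F2 (r *\<^sub>R a) w = r * F2 a w"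
    and F2s: "\<And>a b. F2 a b = F2 b a"
  assumes H2l: "\<And>a b w. H2 (a+b) w = H2 a w + H2 b w" "\<And>a r w. H2 (r *\<^sub>R a) w = r * H2 a w"
    and H2s: "\<And>a b. H2 a b = H2 b a"
  assumes Zv: "Zv = Vvec (-2) gH H0 x" and Vv: "Vv = Vvec c gf f0 x"
    and dL: "\<And>a. dL a = F2 Zv a + DPhiJ (-2) H2 gH x gf a - c * (H2 et a * f0 + inner gH et * inner gf a)"
  shows "dL (Kop xi) - dL et * inner (Pop x) xi + inner xi et * (dL (Pop x) + c * (inner gf Zv - c * inner gH et * f0))
     = DPhiJ c F2 gf x xi Zv - (c+2) * inner gH et * PhiJ c gf f0 x xi - DPhiJ (-2) H2 gH x xi Vv"
proof -
  have F2n: "F2 (-a) w = - F2 a w" for a w using F2l(2)[where r="-1" and a=a and w=w] by simp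
  have F2d: "F2 (a - b) w = F2 a w - F2 b w" for a b w
    using F2l(1)[where a=a and b="-b" and w=w] F2n[of b w] by simp
  have F2m: "F2 (-a) w = - F2 a w" "F2 (a - b) w = F2 a w - F2 b w" "F2 w (a+b) = F2 w a + F2 w b"
    "F2 w (-a) = - F2 w a" "F2 w (a - b) = F2 w a - F2 w b" "F2 w (r *\<^sub>R a) = r * F2 w a" for a b w r
    by (simp_all only: F2n F2d) (metis F2s F2l F2n F2d)+
  have H2n: "H2 (-a) w = - H2 a w" for a w using H2l(2)[where r="-1" and a=a and w=w] by simp
  have H2d: "H2 (a - b) w = H2 a w - H2 b w" for a b w
    using H2l(1)[where a=a and b="-b" and w=w] H2n[of b w] by simp
  have H2m: "H2 (-a) w = - H2 a w" "H2 (a - b) w = H2 a w - H2 b w" "H2 w (a+b) = H2 w a + H2 w b"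
    "H2 w (-a) = - H2 w a" "H2 w (a - b) = H2 w a - H2 w b" "H2 w (r *\<^sub>R a) = r * H2 w a" for a b w r
    by (simp_all only: H2n H2d) (metis H2s H2l H2n H2d)+
  show ?thesis unfolding Zv Vv dL Vvec_def DPhiJ_def PhiJ_def
    by (simp add: F2l F2m H2l H2m inner_simps algebra_simps F2s H2s ie inner_commute)
qed

lemma inner_unit[simp]: "inner g (axis k 1, 0, 0) = fst g $ k" "inner g (0, axis k 1, 0) = fst (snd g) $ k"
  "inner g (0, 0, 1) = snd (snd g)" for g :: "'n::finite pt"
  by (auto simp: inner_prod_def inner_axis)

lemma Xop_PhiJ:
  fixes u :: "'n::finite pt \<Rightarrow> real"
  assumes "u differentiable (at x)"
  shows "Xop lam u x xi = PhiJ (2 * (real CARD('n) + 1) * lam) (grad u x) (u x) x xi"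
proof -
  have "pd u w x = inner (grad u x) w" for w using pd_grad[OF assms] .
  then show ?thesis
    unfolding Xop_def PhiJ_def dq_def dp_def dt_def Es_def Es_xi_def
    by (simp add: ie inner_axis inner_vec_def sum_subtractf sum.distrib
        sum_distrib_left algebra_simps del: inner_KP)
qed

lemma bl_Pop: "bounded_linear (Pop :: 'n::finite pt \<Rightarrow> 'n pt)"
  by (rule linear_conv_bounded_linear[THEN iffD1], rule linearI) simp_all

lemma grad_has: "C2 u \<Longrightarrow> (grad u has_derivative (\<lambda>w. \<Sum>b\<in>Basis. pd (pd u b) w y *\<^sub>R b)) (at y)"
  unfolding grad_def
  by (intro has_derivative_sum has_derivative_scaleR_left pd_has C1_diff C2_pd_C1)

lemma grad_has': "C2 u \<Longrightarrow> ((\<lambda>z. grad u z) has_derivative (\<lambda>w. \<Sum>b\<in>Basis. pd (pd u b) w y *\<^sub>R b)) (at y)"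
  by (rule grad_has)


lemma inner_G2'': "C2 u \<Longrightarrow> inner v (\<Sum>b\<in>Basis. pd (pd u b) w y *\<^sub>R b) = pd (pd u v) w y"
  by (simp add: inner_sum_right C2_exp1[of u v] mult.commute inner_commute)

lemma inner_G2: "C2 u \<Longrightarrow> inner (\<Sum>b\<in>Basis. pd (pd u b) w y *\<^sub>R b) v = pd (pd u v) w y"
  by (subst inner_commute) (rule inner_G2'')

lemma PhiJ_deriv:
  fixes u :: "'n::finite pt \<Rightarrow> real"
  assumes u: "C2 u"
  shows "((\<lambda>z. PhiJ c (grad u z) (u z) z xi) has_derivative
     (\<lambda>w. DPhiJ c (\<lambda>a b. pd (pd u a) b y) (grad u y) y xi w)) (at y)"
proof -
  define G where "G = (\<lambda>w. \<Sum>b\<in>Basis. pd (pd u b) w y *\<^sub>R b)"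
  have g: "((\<lambda>z. grad u z) has_derivative G) (at y)" unfolding G_def by (rule grad_has'[OF u])
  have P: "((\<lambda>z. Pop z) has_derivative Pop) (at y)"
    by (rule bounded_linear.has_derivative[OF bl_Pop has_derivative_ident])
  have ud: "(u has_derivative (\<lambda>w. pd u w y)) (at y)" by (intro pd_has C1_diff C2_C1[OF u])
  have A: "((\<lambda>z. inner (grad u z) (Kop xi)) has_derivative (\<lambda>w. inner (G w) (Kop xi))) (at y)"
    by (rule has_derivative_inner_left[OF g])
  have B: "((\<lambda>z. inner (grad u z) et * inner (Pop z) xi) has_derivative
      (\<lambda>w. inner (grad u y) et * inner (Pop w) xi + inner (G w) et * inner (Pop y) xi)) (at y)"
    by (rule has_derivative_mult[OF has_derivative_inner_left[OF g] has_derivative_inner_left[OF P]])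
  have C: "((\<lambda>z. inner xi et * (inner (grad u z) (Pop z) + c * u z)) has_derivative
      (\<lambda>w. inner xi et * ((inner (grad u y) (Pop w) + inner (G w) (Pop y)) + c * pd u w y))) (at y)"
    by (rule has_derivative_mult_right, rule has_derivative_add[OF has_derivative_inner[OF g P]],
        rule has_derivative_mult_right[OF ud])
  have D: "((\<lambda>z. PhiJ c (grad u z) (u z) z xi) has_derivative
      (\<lambda>w. inner (G w) (Kop xi) - (inner (grad u y) et * inner (Pop w) xi + inner (G w) et * inner (Pop y) xi)
        + inner xi et * ((inner (grad u y) (Pop w) + inner (G w) (Pop y)) + c * pd u w y))) (at y)"
    unfolding PhiJ_def by (rule has_derivative_add[OF has_derivative_diff[OF A B] C])
  show ?thesis
    apply (rule has_derivative_eq_rhs[OF D])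
    apply (rule ext)
    apply (simp add: G_def DPhiJ_def inner_G2[OF u] pd_grad[OF C1_diff[OF C2_C1[OF u]]] del: inner_KP)
    done
qed


lemma inner_pt: "inner a b = inner (fst a) (fst b) + inner (fst (snd a)) (fst (snd b)) + snd (snd a) * snd (snd b)"
  for a b :: "'n::finite pt"
  by (simp add: inner_prod_def)

lemma comps: "fst (Kop v) = - fst (snd v)" "fst (snd (Kop v)) = fst v" "snd (snd (Kop v)) = 0"
  "fst (Pop v) = fst v" "fst (snd (Pop v)) = fst (snd v)" "snd (snd (Pop v)) = 0"
  "fst (et::'n::finite pt) = 0" "fst (snd (et::'n pt)) = 0" "snd (snd (et::'n pt)) = 1"
  for v :: "'n::finite pt"
  by (simp_all add: Kop_def Pop_def et_def)

lemma Kop_anti: "inner (Kop a) b = - inner (Kop b) a" for a b :: "'n::finite pt"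
  by (simp add: inner_pt comps inner_commute)

lemma Kop_adj: "inner (Kop a) b = - inner a (Kop b)" for a b :: "'n::finite pt"
  by (simp add: inner_pt comps inner_commute)

lemma bl_Kop: "bounded_linear (Kop :: 'n::finite pt \<Rightarrow> 'n pt)"
  by (rule linear_conv_bounded_linear[THEN iffD1], rule linearI) simp_all

lemma alpha_eq: "alpha y = -(1/2) *\<^sub>R (Kop y + et)"
  by (simp add: alpha_def Kop_def et_def)

lemma alpha_inner: "inner (alpha y) c = (1/2) * inner y (Kop c) - (1/2) * inner et c"
proof -
  have "inner (alpha y) c = -(1/2) * (inner (Kop y) c + inner et c)"
    by (simp add: alpha_eq inner_add_left)
  then show ?thesis by (simp add: Kop_adj algebra_simps)
qed

lemma alpha_has: "(alpha has_derivative (\<lambda>w. -(1/2) *\<^sub>R Kop w)) (at y)"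
proof -
  have "((\<lambda>y. -(1/2) *\<^sub>R (Kop y + et)) has_derivative (\<lambda>w. -(1/2) *\<^sub>R (Kop w + 0))) (at y)"
    by (intro has_derivative_scaleR_right has_derivative_add has_derivative_const
        bounded_linear.has_derivative[OF bl_Kop has_derivative_ident])
  then show ?thesis by (simp add: alpha_eq[abs_def])
qed

definition Hof :: "('n::finite pt \<Rightarrow> 'n pt) \<Rightarrow> 'n pt \<Rightarrow> real" where
  "Hof Z y = inner (alpha y) (Z y)"

lemma sum_Basis_prod_real:
  fixes f :: "('a::euclidean_space \<times> 'b::euclidean_space) \<Rightarrow> real"
  shows "sum f Basis = sum (\<lambda>i. f (i, 0)) Basis + sum (\<lambda>i. f (0, i)) Basis"
proof -
  have "inj_on (\<lambda>u. (u::'a, 0::'b)) Basis" "inj_on (\<lambda>u. (0::'a, u::'b)) Basis"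
    by (auto intro!: inj_onI Pair_inject)
  thus ?thesis
    unfolding Basis_prod_def
    by (subst sum.union_disjoint) (auto simp: Basis_prod_def sum.reindex)
qed

lemma trace_Pop: "(\<Sum>b\<in>(Basis :: 'n::finite pt set). inner (Pop b) b) = 2 * real CARD('n)"
proof -
  have c: "(\<Sum>i\<in>(Basis :: (real^'n) set). (1::real)) = real CARD('n)" by simp
  have e1: "(\<Sum>i\<in>(Basis :: (real^'n) set). inner (Pop (i, 0 :: (real^'n) \<times> real)) (i, 0)) = real CARD('n)"
    by (subst c[symmetric], rule sum.cong) (auto simp: Pop_def zero_prod_def inner_Basis)
  have e2: "(\<Sum>i\<in>(Basis :: ((real^'n) \<times> real) set). inner (Pop (0 :: real^'n, i)) (0, i)) = real CARD('n)"
  proof -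
    have "(\<Sum>i\<in>(Basis :: ((real^'n) \<times> real) set). inner (Pop (0 :: real^'n, i)) (0, i))
       = (\<Sum>k\<in>(Basis :: (real^'n) set). inner (Pop (0 :: real^'n, (k, 0::real))) (0, (k, 0)))
         + (\<Sum>r\<in>(Basis :: real set). inner (Pop (0 :: real^'n, (0 :: real^'n, r))) (0, (0, r)))"
      by (rule sum_Basis_prod_real)
    also have "(\<Sum>k\<in>(Basis :: (real^'n) set). inner (Pop (0 :: real^'n, (k, 0::real))) (0, (k, 0))) = real CARD('n)"
      by (subst c[symmetric], rule sum.cong) (auto simp: Pop_def inner_Basis)
    also have "(\<Sum>r\<in>(Basis :: real set). inner (Pop (0 :: real^'n, (0 :: real^'n, r))) (0, (0, r))) = 0"
      by (simp add: Pop_def)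
    finally show ?thesis by simp
  qed
  show ?thesis by (subst sum_Basis_prod_real) (simp add: e1 e2)
qed

lemma Pop_adj: "inner a (Pop b) = inner (Pop a) b" for a b :: "'n::finite pt"
  by (simp add: inner_pt comps)

lemma sumB2: "C2 u \<Longrightarrow> (\<Sum>b\<in>Basis. (v \<bullet> b) * pd (pd u a) b y) = pd (pd u a) v y"
  by (simp add: C2_sym[of u a] C2_exp1[of u v])

lemma trace_Kop:
  fixes u :: "'n::finite pt \<Rightarrow> real"
  assumes u: "C2 u"
  shows "(\<Sum>b\<in>Basis. pd (pd u (Kop b)) b y) = 0"
proof -
  define B where "B a w = pd (pd u a) w y" for a w
  have sym: "B a w = B w a" for a w unfolding B_def by (rule C2_sym[OF u])
  have ex: "B a w = (\<Sum>c\<in>Basis. (a \<bullet> c) * B c w)" for a w unfolding B_def by (rule C2_exp1[OF u])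
  define S where "S = (\<Sum>b\<in>Basis. B (Kop b) b)"
  have "S = (\<Sum>b\<in>Basis. \<Sum>c\<in>Basis. (Kop b \<bullet> c) * B c b)"
    unfolding S_def by (rule sum.cong[OF refl], rule ex)
  also have "\<dots> = (\<Sum>b\<in>Basis. \<Sum>c\<in>Basis. - ((Kop c \<bullet> b) * B b c))"
    by (intro sum.cong refl) (metis Kop_anti sym mult_minus_left)
  also have "\<dots> = - (\<Sum>c\<in>Basis. \<Sum>b\<in>Basis. (Kop c \<bullet> b) * B b c)"
    by (subst sum.swap) (simp add: sum_negf)
  also have "\<dots> = - S"
    unfolding S_def by (simp add: ex[of "Kop _"])
  finally have "S = 0" by simp
  then show ?thesis by (simp add: S_def B_def)
qed

lemma DPhiJ_trace:
  fixes u :: "'n::finite pt \<Rightarrow> real"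
  assumes u: "C2 u"
  shows "(\<Sum>b\<in>Basis. DPhiJ c (\<lambda>a w. pd (pd u a) w y) (grad u y) y b b) = (c - 2 * real CARD('n)) * pd u et y"
proof -
  define B where "B a w = pd (pd u a) w y" for a w
  define gu where "gu = grad u y"
  have sym: "B a w = B w a" for a w unfolding B_def by (rule C2_sym[OF u])
  have s2: "(\<Sum>b\<in>Basis. (v \<bullet> b) * B a b) = B a v" for v a unfolding B_def by (rule sumB2[OF u])
  have gue: "inner gu et = pd u et y" unfolding gu_def by (rule pd_grad[OF C1_diff[OF C2_C1[OF u]], symmetric])
  have "(\<Sum>b\<in>Basis. DPhiJ c B gu y b b) = (\<Sum>b\<in>Basis. B (Kop b) b) - (\<Sum>b\<in>Basis. (Pop y \<bullet> b) * B et b)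
      - (\<Sum>b\<in>(Basis :: 'n pt set). inner gu et * inner (Pop b) b) + (\<Sum>b\<in>Basis. (et \<bullet> b) * B (Pop y) b)
      + (\<Sum>b\<in>Basis. (et \<bullet> b) * (Pop gu \<bullet> b)) + c * (\<Sum>b\<in>Basis. (et \<bullet> b) * (gu \<bullet> b))"
    unfolding DPhiJ_def
    by (simp add: sum.distrib sum_subtractf sum_distrib_left algebra_simps inner_commute[of _ et] Pop_adj
        inner_commute[of gu])
  also have "\<dots> = 0 - B et (Pop y) - inner gu et * (2 * real CARD('n)) + B (Pop y) et + 0 + c * inner gu et"
  proof -
    have a: "(\<Sum>b\<in>Basis. (Pop y \<bullet> b) * B et b) = B et (Pop y)" by (rule s2)
    have b: "(\<Sum>b\<in>Basis. (et \<bullet> b) * B (Pop y) b) = B (Pop y) et" by (rule s2)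
    have c0: "(\<Sum>b\<in>Basis. (et \<bullet> b) * (Pop gu \<bullet> b)) = 0"
      using euclidean_inner[of et "Pop gu"] by (simp add: inner_pt comps)
    have d: "(\<Sum>b\<in>Basis. (et \<bullet> b) * (gu \<bullet> b)) = inner gu et"
      using euclidean_inner[of et gu] by (simp add: inner_commute)
    have e: "(\<Sum>b\<in>(Basis :: 'n pt set). inner gu et * inner (Pop b) b) = inner gu et * (2 * real CARD('n))"
      by (simp add: sum_distrib_left[symmetric] trace_Pop)
    have t: "(\<Sum>b\<in>Basis. B (Kop b) b) = 0" unfolding B_def by (rule trace_Kop[OF u])
    show ?thesis unfolding a b c0 d e t ..
  qed
  also have "\<dots> = (c - 2 * real CARD('n)) * pd u et y" using sym[of et "Pop y"] gue by (simp add: algebra_simps)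
  finally show ?thesis unfolding B_def gu_def .
qed

context
  fixes Z :: "'n::finite pt \<Rightarrow> 'n pt" and g :: "'n pt \<Rightarrow> real"
  assumes Zs: "smooth_vf Z" and gs: "smooth g" and lf: "\<And>x. lie_form Z alpha x = g x *\<^sub>R alpha x"
begin

lemma Zc: "c \<in> Basis \<Longrightarrow> C1 (\<lambda>y. Z y \<bullet> c)"
  using Zs smooth_C1 unfolding smooth_vf_def by blast

lemma Z_inner_C1: "C1 (\<lambda>y. inner (Z y) v)"
proof -
  have "(\<lambda>y. inner (Z y) v) = (\<lambda>y. \<Sum>c\<in>Basis. (Z y \<bullet> c) * (v \<bullet> c))"
    by (rule ext, rule euclidean_inner)
  moreover have "C1 (\<lambda>y. \<Sum>c\<in>Basis. (Z y \<bullet> c) * (v \<bullet> c))"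
    by (intro C1_sum C1_mult Zc C1_const) auto
  ultimately show ?thesis by simp
qed

lemma Z_diff: "Z differentiable (at y)"
proof -
  have "Z = (\<lambda>y. \<Sum>c\<in>Basis. (Z y \<bullet> c) *\<^sub>R c)" by (simp add: euclidean_representation)
  moreover have "(\<lambda>y. \<Sum>c\<in>Basis. (Z y \<bullet> c) *\<^sub>R c) differentiable (at y)"
  proof -
    have "(\<lambda>y. (Z y \<bullet> c) *\<^sub>R c) differentiable (at y)" if "c \<in> Basis" for c
      by (intro differentiable_scaleR C1_diff[OF Zc] differentiable_const that)
    then show ?thesis by (intro differentiable_sum) auto
  qed
  ultimately show ?thesis by simp
qed

lemma Z_has: "(Z has_derivative frechet_derivative Z (at y)) (at y)"
  using Z_diff frechet_derivative_works by blast

lemma pd_Zinner: "pd (\<lambda>z. inner (Z z) v) w y = inner (frechet_derivative Z (at y) w) v"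
  by (rule pd_eq[OF has_derivative_inner_left[OF Z_has]])

lemma DZ_linear: "linear (frechet_derivative Z (at y))"
  using linear_frechet_derivative[OF Z_diff] .

lemma pd_alpha: "pd (\<lambda>y. alpha y \<bullet> b) w y = -(1/2) * inner (Kop w) b"
  by (rule pd_eq[OF has_derivative_inner_left[OF alpha_has], THEN trans]) simp

lemma lf_basis:
  assumes b: "b \<in> Basis"
  shows "-(1/2) * inner (Kop (Z y)) b + inner (frechet_derivative Z (at y) b) (alpha y) = g y * inner (alpha y) b"
proof -
  have "lie_form Z alpha y \<bullet> b = g y * inner (alpha y) b" using lf[of y] by simp
  moreover have "lie_form Z alpha y \<bullet> b = pd (\<lambda>y. alpha y \<bullet> b) (Z y) y
      + (\<Sum>c\<in>Basis. (alpha y \<bullet> c) * pd (\<lambda>y. Z y \<bullet> c) b y)"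
    unfolding lie_form_def using b by simp
  moreover have "(\<Sum>c\<in>Basis. (alpha y \<bullet> c) * pd (\<lambda>y. Z y \<bullet> c) b y)
      = inner (frechet_derivative Z (at y) b) (alpha y)"
    by (simp add: pd_Zinner euclidean_inner[of "frechet_derivative Z (at y) b" "alpha y"] mult.commute)
  ultimately show ?thesis by (simp add: pd_alpha)
qed

lemma lf_all:
  "-(1/2) * inner (Kop (Z y)) w + inner (frechet_derivative Z (at y) w) (alpha y) = g y * inner (alpha y) w"
proof -
  have l1: "linear (\<lambda>w. -(1/2) * inner (Kop (Z y)) w + inner (frechet_derivative Z (at y) w) (alpha y))"
  proof -
    have bD: "bounded_linear (frechet_derivative Z (at y))"
      using Z_has[of y] has_derivative_bounded_linear by blast
    have "bounded_linear (\<lambda>w. -(1/2) * inner (Kop (Z y)) w + inner (frechet_derivative Z (at y) w) (alpha y))"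
      by (intro bounded_linear_add bounded_linear_mult_right bounded_linear_inner_right
          bounded_linear_compose[OF bounded_linear_inner_left bD]
        bounded_linear_compose[OF bounded_linear_mult_right bounded_linear_inner_right])
    then show ?thesis by (rule bounded_linear.linear)
  qed
  have l2: "linear (\<lambda>w. g y * inner (alpha y) w)"
    by (intro bounded_linear.linear bounded_linear_compose[OF bounded_linear_mult_right bounded_linear_inner_right])
  have "(\<lambda>w. -(1/2) * inner (Kop (Z y)) w + inner (frechet_derivative Z (at y) w) (alpha y)) = (\<lambda>w. g y * inner (alpha y) w)"
    by (rule linear_eq_stdbasis[OF l1 l2], rule lf_basis)
  from fun_cong[OF this, of w] show ?thesis by simp
qed

lemma H_pd: "pd (Hof Z) w y = inner (Kop (Z y)) w + g y * inner (alpha y) w"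
proof -
  have "(Hof Z has_derivative (\<lambda>w. inner (alpha y) (frechet_derivative Z (at y) w) + inner (-(1/2) *\<^sub>R Kop w) (Z y))) (at y)"
    unfolding Hof_def[abs_def] by (rule has_derivative_inner[OF alpha_has Z_has])
  then have "pd (Hof Z) w y = inner (alpha y) (frechet_derivative Z (at y) w) + inner (-(1/2) *\<^sub>R Kop w) (Z y)"
    by (rule pd_eq)
  also have "\<dots> = inner (Kop (Z y)) w + g y * inner (alpha y) w"
    using lf_all[of y w] Kop_anti[of w "Z y"] by (simp add: inner_commute[of "alpha y"] algebra_simps)
  finally show ?thesis .
qed

lemma H_diff: "Hof Z differentiable (at y)"
  unfolding Hof_def[abs_def] differentiable_def using has_derivative_inner[OF alpha_has Z_has] by blast

lemma H_C2: "C2 (Hof Z)"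
proof -
  have e: "pd (Hof Z) c = (\<lambda>y. (-1) * inner (Z y) (Kop c) + g y * ((1/2) * inner y (Kop c) - (1/2) * inner et c))" for c
    by (rule ext) (simp add: H_pd alpha_inner Kop_adj)
  have c1: "C1 (pd (Hof Z) c)" for c
  proof -
    have a: "C1 (\<lambda>y. (-1) * inner (Z y) (Kop c))" by (rule C1_mult[OF C1_const Z_inner_C1])
    have b: "C1 (\<lambda>y. (1/2) * inner y (Kop c) - (1/2) * inner et c)"
      by (rule C1_diff'[OF C1_mult[OF C1_const C1_lin] C1_const])
    have "C1 (\<lambda>y. g y * ((1/2) * inner y (Kop c) - (1/2) * inner et c))"
      by (rule C1_mult[OF smooth_C1[OF gs] b])
    from C1_add[OF a this] show ?thesis unfolding e .
  qed
  have "C1 (Hof Z)" by (rule C1_I[OF H_diff C1_cont[OF c1]])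
  then show ?thesis unfolding C2_def using c1 by blast
qed

lemma gH_inner: "inner (grad (Hof Z) y) v = inner (Kop (Z y)) v + g y * inner (alpha y) v"
  using pd_grad[OF H_diff[of y], of v] H_pd by simp

lemma contact: "inner (Z y) xi = PhiJ (-2) (grad (Hof Z) y) (Hof Z y) y xi"
  unfolding PhiJ_def gH_inner Hof_def
  by (simp add: alpha_eq inner_pt comps inner_simps algebra_simps inner_commute del: inner_KP)

lemma Z_eq: "Z y = Vvec (-2) (grad (Hof Z) y) (Hof Z y) y"
  by (rule euclidean_eqI) (simp add: contact PhiJ_Vvec)

lemma Z_fun: "(\<lambda>z. Z z \<bullet> v) = (\<lambda>z. PhiJ (-2) (grad (Hof Z) z) (Hof Z z) z v)"
  by (rule ext) (rule contact)

lemma pd_Zv: "pd (\<lambda>z. Z z \<bullet> v) w y = DPhiJ (-2) (\<lambda>a b. pd (pd (Hof Z) a) b y) (grad (Hof Z) y) y v w"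
  unfolding Z_fun by (rule pd_eq[OF PhiJ_deriv[OF H_C2]])

lemma divg_eq: "divg Z y = -2 * (real CARD('n) + 1) * pd (Hof Z) et y"
proof -
  have "divg Z y = (\<Sum>b\<in>Basis. DPhiJ (-2) (\<lambda>a b. pd (pd (Hof Z) a) b y) (grad (Hof Z) y) y b b)"
    unfolding divg_def by (simp add: pd_Zv)
  also have "\<dots> = (-2 - 2 * real CARD('n)) * pd (Hof Z) et y" by (rule DPhiJ_trace[OF H_C2])
  finally show ?thesis by (simp add: algebra_simps)
qed

end


theorem mainTheorem1:
  fixes lam :: real and Z :: "'n::finite pt \<Rightarrow> 'n pt" and f :: "'n pt \<Rightarrow> real"
  assumes "contact_vf Z" and "smooth f"
  shows "Xop lam (lie_dens lam Z f) =
         lie_symb (lam + 1 / (real CARD('n) + 1)) Z (Xop lam f)"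
proof -
  obtain g where Zs: "smooth_vf Z" and gs: "smooth g" and lf: "\<And>x. lie_form Z alpha x = g x *\<^sub>R alpha x"
    using assms(1) unfolding contact_vf_def by blast
  define c where "c = 2 * (real CARD('n) + 1) * lam"
  define H where "H = Hof Z"
  have fC2: "C2 f" by (rule smooth_C2[OF assms(2)])
  have HC2: "C2 H" unfolding H_def by (rule H_C2[OF Zs gs lf])
  have fd: "\<And>y. f differentiable (at y)" using C1_diff[OF C2_C1[OF fC2]] .
  have fbd: "\<And>a y. pd f a differentiable (at y)" using C1_diff[OF C2_pd_C1[OF fC2]] .
  have Hbd: "\<And>a y. pd H a differentiable (at y)" using C1_diff[OF C2_pd_C1[OF HC2]] .
  have Zbd: "\<And>b y. (\<lambda>z. Z z \<bullet> b) differentiable (at y)" using C1_diff[OF Z_inner_C1[OF Zs gs lf]] .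
  define Lf where "Lf = (\<lambda>y. (\<Sum>b\<in>Basis. (Z y \<bullet> b) * pd f b y) - c * (pd H et y * f y))"
  have L_eq: "lie_dens lam Z f = Lf"
  proof (rule ext)
    fix y
    have pe: "pd f (Z y) y = (\<Sum>b\<in>Basis. (Z y \<bullet> b) * pd f b y)" by (rule pd_expand[OF fd])
    have d: "divg Z y = -2 * (real CARD('n) + 1) * pd H et y" unfolding H_def by (rule divg_eq[OF Zs gs lf])
    show "lie_dens lam Z f y = Lf y" unfolding lie_dens_def Lf_def c_def pe d
      by (simp add: algebra_simps)
  qed
  show ?thesis
  proof (rule ext, rule ext)
    fix x xi
    define F2 where "F2 a w = pd (pd f a) w x" for a w
    define H2 where "H2 a w = pd (pd H a) w x" for a w
    define gf where "gf = grad f x"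
    define gH where "gH = grad H x"
    define DZ where "DZ = frechet_derivative Z (at x)"
    define Vv where "Vv = Vvec c gf (f x) x"
    have Zx: "Z x = Vvec (-2) gH (H x) x" unfolding gH_def H_def by (rule Z_eq[OF Zs gs lf])
    have gfi: "\<And>w. pd f w x = inner gf w" unfolding gf_def by (rule pd_grad[OF fd])
    have gHi: "\<And>w. pd H w x = inner gH w" unfolding gH_def by (rule pd_grad[OF C1_diff[OF C2_C1[OF HC2]]])
    have pdZ: "\<And>v w. pd (\<lambda>z. Z z \<bullet> v) w x = DPhiJ (-2) H2 gH x v w"
      unfolding H2_def gH_def H_def by (rule pd_Zv[OF Zs gs lf])
    have pdZ': "\<And>v w. pd (\<lambda>z. Z z \<bullet> v) w x = inner (DZ w) v"
      unfolding DZ_def by (rule pd_Zinner[OF Zs gs lf])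
    have hLf: "(Lf has_derivative (\<lambda>w. (\<Sum>b\<in>Basis. (Z x \<bullet> b) * pd (pd f b) w x + pd (\<lambda>z. Z z \<bullet> b) w x * pd f b x)
        - c * (pd H et x * pd f w x + pd (pd H et) w x * f x))) (at x)"
      unfolding Lf_def
      by (intro has_derivative_diff has_derivative_sum has_derivative_mult has_derivative_mult_right
          pd_has Zbd fbd Hbd fd)
    have Ld: "Lf differentiable (at x)" using hLf differentiable_def by blast
    define dL where "dL w = F2 (Z x) w + DPhiJ (-2) H2 gH x gf w - c * (H2 et w * f x + inner gH et * inner gf w)" for w
    have dL: "pd Lf w x = dL w" for w
    proof -
      have "pd Lf w x = (\<Sum>b\<in>Basis. (Z x \<bullet> b) * pd (pd f b) w x + pd (\<lambda>z. Z z \<bullet> b) w x * pd f b x)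
        - c * (pd H et x * pd f w x + pd (pd H et) w x * f x)" by (rule pd_eq[OF hLf])
      also have "(\<Sum>b\<in>Basis. (Z x \<bullet> b) * pd (pd f b) w x + pd (\<lambda>z. Z z \<bullet> b) w x * pd f b x)
          = F2 (Z x) w + inner (DZ w) gf"
      proof -
        have "(\<Sum>b\<in>Basis. (Z x \<bullet> b) * pd (pd f b) w x) = F2 (Z x) w"
          unfolding F2_def by (rule C2_exp1[OF fC2, symmetric])
        moreover have "(\<Sum>b\<in>Basis. pd (\<lambda>z. Z z \<bullet> b) w x * pd f b x) = inner (DZ w) gf"
          by (simp add: pdZ' gfi euclidean_inner[of "DZ w" gf])
        ultimately show ?thesis by (simp add: sum.distrib)
      qed
      also have "inner (DZ w) gf = DPhiJ (-2) H2 gH x gf w" using pdZ[of gf w] pdZ'[of gf w] by simp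
      finally show ?thesis unfolding dL_def H2_def gHi gfi by simp
    qed
    have gL: "inner (grad Lf x) v = dL v" for v using pd_grad[OF Ld, of v] dL by simp
    have Lx: "Lf x = inner gf (Z x) - c * inner gH et * f x"
      unfolding Lf_def by (simp add: gfi gHi euclidean_inner[of gf "Z x"] mult.commute)
    have LHS: "Xop lam (lie_dens lam Z f) x xi =
        dL (Kop xi) - dL et * inner (Pop x) xi + inner xi et * (dL (Pop x) + c * (inner gf (Z x) - c * inner gH et * f x))"
      unfolding L_eq Xop_PhiJ[OF Ld] c_def[symmetric] PhiJ_def gL Lx ..
    have Xf: "(\<lambda>y. Xop lam f y xi) = (\<lambda>y. PhiJ c (grad f y) (f y) y xi)"
      by (rule ext) (simp add: Xop_PhiJ[OF fd] c_def)
    have R1: "pd (\<lambda>y. Xop lam f y xi) (Z x) x = DPhiJ c F2 gf x xi (Z x)"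
      unfolding Xf F2_def gf_def by (rule pd_eq[OF PhiJ_deriv[OF fC2]])
    have R2: "divg Z x = -2 * (real CARD('n) + 1) * inner gH et"
      using divg_eq[OF Zs gs lf, of x] gHi unfolding H_def by simp
    have R2': "Xop lam f x xi = PhiJ c gf (f x) x xi" unfolding gf_def c_def by (rule Xop_PhiJ[OF fd])
    have Xe: "(\<lambda>eta. Xop lam f x eta) = (\<lambda>eta. inner Vv eta)"
      by (rule ext) (simp add: Xop_PhiJ[OF fd] PhiJ_Vvec Vv_def gf_def c_def)
    have pXe: "pd (\<lambda>eta. Xop lam f x eta) l xi = inner Vv l" for l
      unfolding Xe by (rule pd_eq[OF has_derivative_inner_right[OF has_derivative_ident]])
    have R3: "(\<Sum>j\<in>Basis. \<Sum>l\<in>Basis. pd (\<lambda>y. Z y \<bullet> j) l x * (xi \<bullet> j) * pd (\<lambda>eta. Xop lam f x eta) l xi)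
        = DPhiJ (-2) H2 gH x xi Vv"
    proof -
      have "(\<Sum>j\<in>Basis. \<Sum>l\<in>Basis. pd (\<lambda>y. Z y \<bullet> j) l x * (xi \<bullet> j) * pd (\<lambda>eta. Xop lam f x eta) l xi)
          = (\<Sum>j\<in>Basis. (xi \<bullet> j) * (\<Sum>l\<in>Basis. (Vv \<bullet> l) * pd (\<lambda>y. Z y \<bullet> j) l x))"
        by (simp add: pXe sum_distrib_left algebra_simps)
      also have "\<dots> = (\<Sum>j\<in>Basis. (xi \<bullet> j) * pd (\<lambda>y. Z y \<bullet> j) Vv x)"
        by (simp add: pd_expand[OF Zbd, of _ Vv x])
      also have "\<dots> = inner (DZ Vv) xi"
        by (simp add: pdZ' euclidean_inner[of "DZ Vv" xi] mult.commute)
      also have "\<dots> = DPhiJ (-2) H2 gH x xi Vv" using pdZ[of xi Vv] pdZ'[of xi Vv] by simp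
      finally show ?thesis .
    qed
    have RHS: "lie_symb (lam + 1 / (real CARD('n) + 1)) Z (Xop lam f) x xi
        = DPhiJ c F2 gf x xi (Z x) - (c+2) * inner gH et * PhiJ c gf (f x) x xi - DPhiJ (-2) H2 gH x xi Vv"
    proof -
      have "(lam + 1 / (real CARD('n) + 1)) * (-2 * (real CARD('n) + 1) * inner gH et) = - (c + 2) * inner gH et"
        unfolding c_def by (simp add: field_simps)
      then show ?thesis unfolding lie_symb_def R1 R2 R2' R3 by (simp add: algebra_simps)
    qed
    have F2l: "F2 (a+b) w = F2 a w + F2 b w" "F2 (r *\<^sub>R a) w = r * F2 a w" for a b w r
      unfolding F2_def using C2_bil[OF fC2] by auto
    have F2s: "F2 a b = F2 b a" for a b unfolding F2_def by (rule C2_sym[OF fC2])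
    have H2l: "H2 (a+b) w = H2 a w + H2 b w" "H2 (r *\<^sub>R a) w = r * H2 a w" for a b w r
      unfolding H2_def using C2_bil[OF HC2] by auto
    have H2s: "H2 a b = H2 b a" for a b unfolding H2_def by (rule C2_sym[OF HC2])
    show "Xop lam (lie_dens lam Z f) x xi = lie_symb (lam + 1 / (real CARD('n) + 1)) Z (Xop lam f) x xi"
      unfolding LHS RHS
      by (rule alg2[OF F2l F2s H2l H2s Zx Vv_def]) (simp add: dL_def)
  qed
qed


end
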